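(* Suppose $F$ is a $\mu$-PL function for some $\mu>0$. Let $b\le n$, let $m\ge1$ be an integer, and let $\eta=\rho/L$ where $0<\rho\le 1/5$ satisfies $$\frac{4\rho^2m^2}{b}+\rho\le 1,$$ and let $T=\lceil 6L/(\rho\mu)\rceil$. Then for every integer $K\ge 1$, the output $x^K$ of PL-SVRG$(x^0,K,T,m,b,\eta)$ satisfies $$\mathbb E\big[F(x^K)-F(x^* )\big]\le \frac{F(x^0)-F(x^* )}{2^K},$$ where $x^*$ is an optimal solution of $\min_x F(x)$.
   Context: Setting: Let $n,d\ge 1$ be integers and $[n]=\{1,\dots,n\}$. Let $f_1,\dots,f_n:\mathbb R^d\to\mathbb R$ be differentiable (possibly nonconvex) functions, each $L$-smooth for some $L>0$, i.e. $\|\nabla f_i(x)-\nabla f_i(y)\|\le L\|x-y\|$ for all $x,y\in\mathbb R^d$ and $i\in[n]$. Let $f=\frac1n\sum_{i=1}^n f_i$. Let $h:\mathbb R^d\to\mathbb R\cup\{+\infty\}$ be proper, lower semicontinuous and convex, with closed domain. Let $F=f+h$, and let $x^*$ be a global minimizer of $F$ on $\mathbb R^d$ (assumed to exist). For $\eta>0$, $\mathrm{prox}_{\eta h}(x):=\arg\min_{y\in\mathbb R^d}\big(h(y)+\frac1{2\eta}\|y-x\|^2\big)$. $\mu$-PL functions: for $x\in\mathbb R^d$ and $\alpha>0$ define $D_h(x,\alpha):=-2\alpha\min_{y\in\mathbb R^d}\big[\langle\nabla f(x),y-x\rangle+\frac{\alpha}{2}\|y-x\|^2+h(y)-h(x)\big]$.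 $F$ is called $\mu$-PL ($\mu>0$) if $\mu\,(F(x)-F(x^* ))\le \frac12 D_h(x,\mu)$ for all $x\in\mathrm{dom}(h)$. Algorithm ProxSVRG$(x^0,T,m,b,\eta)$: Given $x^0\in\mathbb R^d$, positive integers $T,m,b$ and $\eta>0$, let $S=\lceil T/m\rceil$ and set $\tilde x^0=x^0_m=x^0$. For $s=0,\dots,S-1$: set $x^{s+1}_0=x^s_m$ and $g^{s+1}=\frac1n\sum_{i=1}^n\nabla f_i(\tilde x^s)$; for $t=0,\dots,m-1$: draw a multiset $I_t$ of $b$ indices, each drawn independently and uniformly at random from $[n]$ (with replacement, independently of all previous draws), set $v^{s+1}_t=\frac1b\sum_{i\in I_t}\big(\nabla f_i(x^{s+1}_t)-\nabla f_i(\tilde x^s)\big)+g^{s+1}$ and $x^{s+1}_{t+1}=\mathrm{prox}_{\eta h}(x^{s+1}_t-\eta v^{s+1}_t)$; after the inner loop set $\tilde x^{s+1}=x^{s+1}_m$. The output $x_a$ is chosen uniformly at random from $\{x^{s+1}_t: 0\le t\le m-1,\ 0\le s\le S-1\}$. Algorithm PL-SVRG$(x^0,K,T,m,b,\eta)$: for $k=1,\dots,K$, let $x^k$ be the output $x_a$ of ProxSVRG$(x^{k-1},T,m,b,\eta)$ (run with fresh independent randomness); output $x^K$. Expectations are over all randomness. *)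

theory Defs
  imports "HOL-Analysis.Analysis" "HOL-Probability.Probability"
begin

text \<open>Component functions f_i (i < n), with gradients gf i; index set [n] is rendered as {..<n}.
  The extended-real function h is rendered by a real function h together with its effective
  domain D (h = +infinity outside D).\<close>

definition avg_fun :: "nat \<Rightarrow> (nat \<Rightarrow> 'a \<Rightarrow> real) \<Rightarrow> 'a \<Rightarrow> real" where
  "avg_fun n fs x = (1 / real n) * (\<Sum>i<n. fs i x)"

definition avg_grad :: "nat \<Rightarrow> (nat \<Rightarrow> 'a \<Rightarrow> 'a::real_vector) \<Rightarrow> 'a \<Rightarrow> 'a" where
  "avg_grad n gf x = (1 / real n) *\<^sub>R (\<Sum>i<n. gf i x)"

definition prox :: "('a::real_normed_vector \<Rightarrow> real) \<Rightarrow> 'a set \<Rightarrow> real \<Rightarrow> 'a \<Rightarrow> 'a" where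
  "prox h D \<eta> x = (ARG_MIN (\<lambda>y. h y + (norm (y - x))^2 / (2 * \<eta>)) y. y \<in> D)"

definition Dh :: "('a::real_inner \<Rightarrow> 'a) \<Rightarrow> ('a \<Rightarrow> real) \<Rightarrow> 'a set \<Rightarrow> 'a \<Rightarrow> real \<Rightarrow> real" where
  "Dh gradf h D x \<alpha> = - 2 * \<alpha> *
     (INF y\<in>D. gradf x \<bullet> (y - x) + \<alpha> / 2 * (norm (y - x))^2 + h y - h x)"

definition is_PL :: "real \<Rightarrow> ('a::real_inner \<Rightarrow> real) \<Rightarrow> ('a \<Rightarrow> 'a) \<Rightarrow> ('a \<Rightarrow> real) \<Rightarrow> 'a set \<Rightarrow> 'a \<Rightarrow> bool" where
  "is_PL \<mu> f gradf h D xstar \<longleftrightarrow> \<mu> > 0 \<and>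
     (\<forall>x\<in>D. \<mu> * ((f x + h x) - (f xstar + h xstar)) \<le> 1/2 * Dh gradf h D x \<mu>)"

text \<open>A multiset of b indices drawn i.i.d. uniformly from {..<n} with replacement,
  represented as a uniformly random list of length b (uniform on {..<n}^b = i.i.d. uniform).\<close>
definition sample_indices :: "nat \<Rightarrow> nat \<Rightarrow> nat list pmf" where
  "sample_indices n b = pmf_of_set {xs. set xs \<subseteq> {..<n} \<and> length xs = b}"

definition svrg_step ::
  "nat \<Rightarrow> (nat \<Rightarrow> 'a \<Rightarrow> 'a::real_normed_vector) \<Rightarrow> ('a \<Rightarrow> real) \<Rightarrow> 'a set \<Rightarrow> nat \<Rightarrow> real
    \<Rightarrow> 'a \<Rightarrow> 'a \<Rightarrow> 'a \<Rightarrow> nat list \<Rightarrow> 'a" where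
  "svrg_step n gf h D b \<eta> xtilde g xt I =
     (let v = (1 / real b) *\<^sub>R (\<Sum>i\<leftarrow>I. gf i xt - gf i xtilde) + g
      in prox h D \<eta> (xt - \<eta> *\<^sub>R v))"

fun svrg_inner ::
  "nat \<Rightarrow> (nat \<Rightarrow> 'a \<Rightarrow> 'a::real_normed_vector) \<Rightarrow> ('a \<Rightarrow> real) \<Rightarrow> 'a set \<Rightarrow> nat \<Rightarrow> real
    \<Rightarrow> 'a \<Rightarrow> 'a \<Rightarrow> nat \<Rightarrow> 'a \<Rightarrow> 'a list pmf" where
  "svrg_inner n gf h D b \<eta> xtilde g 0 x = return_pmf [x]"
| "svrg_inner n gf h D b \<eta> xtilde g (Suc k) x =
     bind_pmf (sample_indices n b) (\<lambda>I.
     bind_pmf (svrg_inner n gf h D b \<eta> xtilde g k (svrg_step n gf h D b \<eta> xtilde g x I)) (\<lambda>xs.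
     return_pmf (x # xs)))"

text \<open>Outer loop with s remaining epochs starting from x = x^{s+1}_0 = tilde x^s; returns the list
  of all points x^{s+1}_t, 0 <= t <= m-1, over the remaining epochs.\<close>
fun svrg_outer ::
  "nat \<Rightarrow> (nat \<Rightarrow> 'a \<Rightarrow> 'a::real_normed_vector) \<Rightarrow> ('a \<Rightarrow> real) \<Rightarrow> 'a set \<Rightarrow> nat \<Rightarrow> real
    \<Rightarrow> nat \<Rightarrow> nat \<Rightarrow> 'a \<Rightarrow> 'a list pmf" where
  "svrg_outer n gf h D b \<eta> m 0 x = return_pmf []"
| "svrg_outer n gf h D b \<eta> m (Suc s) x =
     bind_pmf (svrg_inner n gf h D b \<eta> x (avg_grad n gf x) m x) (\<lambda>xs.
     bind_pmf (svrg_outer n gf h D b \<eta> m s (last xs)) (\<lambda>rest.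
     return_pmf (take m xs @ rest)))"

definition ProxSVRG ::
  "nat \<Rightarrow> (nat \<Rightarrow> 'a \<Rightarrow> 'a::real_normed_vector) \<Rightarrow> ('a \<Rightarrow> real) \<Rightarrow> 'a set
    \<Rightarrow> 'a \<Rightarrow> nat \<Rightarrow> nat \<Rightarrow> nat \<Rightarrow> real \<Rightarrow> 'a pmf" where
  "ProxSVRG n gf h D x0 T m b \<eta> =
     bind_pmf (svrg_outer n gf h D b \<eta> m (nat \<lceil>real T / real m\<rceil>) x0) (\<lambda>pts.
       map_pmf (\<lambda>j. pts ! j) (pmf_of_set {..<length pts}))"

fun PL_SVRG ::
  "nat \<Rightarrow> (nat \<Rightarrow> 'a \<Rightarrow> 'a::real_normed_vector) \<Rightarrow> ('a \<Rightarrow> real) \<Rightarrow> 'a set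
    \<Rightarrow> 'a \<Rightarrow> nat \<Rightarrow> nat \<Rightarrow> nat \<Rightarrow> nat \<Rightarrow> real \<Rightarrow> 'a pmf" where
  "PL_SVRG n gf h D x0 0 T m b \<eta> = return_pmf x0"
| "PL_SVRG n gf h D x0 (Suc k) T m b \<eta> =
     bind_pmf (PL_SVRG n gf h D x0 k T m b \<eta>) (\<lambda>y. ProxSVRG n gf h D y T m b \<eta>)"

end

theory Submission
  imports Defs
begin

lemma line_deriv:
  fixes f :: "'a::euclidean_space \<Rightarrow> real"
  assumes "\<And>z. (f has_derivative (\<lambda>v. g z \<bullet> v)) (at z)"
  shows "((\<lambda>t. f (x + t *\<^sub>R d)) has_real_derivative (g (x + t *\<^sub>R d) \<bullet> d)) (at t)"
proof -
  have l: "((\<lambda>t. x + t *\<^sub>R d) has_derivative (\<lambda>s. s *\<^sub>R d)) (at t)"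
    by (auto intro!: derivative_eq_intros)
  have "((\<lambda>t. f (x + t *\<^sub>R d)) has_derivative (\<lambda>s. g (x + t *\<^sub>R d) \<bullet> (s *\<^sub>R d))) (at t)"
    using has_derivative_compose[OF l assms] by simp
  moreover have "(\<lambda>s. s * (g (x + t *\<^sub>R d) \<bullet> d)) = (*) (g (x + t *\<^sub>R d) \<bullet> d)"
    by (auto simp: mult.commute)
  ultimately show ?thesis unfolding has_field_derivative_def by simp
qed

lemma descent_abs:
  fixes f :: "'a::euclidean_space \<Rightarrow> real"
  assumes der: "\<And>z. (f has_derivative (\<lambda>v. g z \<bullet> v)) (at z)"
    and lip: "\<And>z w. norm (g z - g w) \<le> L * norm (z - w)"
  shows "f y \<le> f x + g x \<bullet> (y - x) + L / 2 * (norm (y - x))^2"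
    and "f y \<ge> f x + g x \<bullet> (y - x) - L / 2 * (norm (y - x))^2"
proof -
  define d where "d = y - x"
  have bnd: "\<bar>g (x + t *\<^sub>R d) \<bullet> d - g x \<bullet> d\<bar> \<le> L * t * (norm d)^2" if "0 \<le> t" for t
  proof -
    have "\<bar>g (x + t *\<^sub>R d) \<bullet> d - g x \<bullet> d\<bar> = \<bar>(g (x + t *\<^sub>R d) - g x) \<bullet> d\<bar>"
      by (simp add: inner_diff_left)
    also have "\<dots> \<le> norm (g (x + t *\<^sub>R d) - g x) * norm d"
      by (rule Cauchy_Schwarz_ineq2)
    also have "\<dots> \<le> L * norm (t *\<^sub>R d) * norm d"
      using lip[of "x + t *\<^sub>R d" x] by (simp add: mult_right_mono)
    also have "\<dots> = L * t * (norm d)^2" using that by (simp add: power2_eq_square)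
    finally show ?thesis .
  qed
  let ?p = "\<lambda>t. f (x + t *\<^sub>R d) - t * (g x \<bullet> d) - L / 2 * t^2 * (norm d)^2"
  let ?q = "\<lambda>t. f (x + t *\<^sub>R d) - t * (g x \<bullet> d) + L / 2 * t^2 * (norm d)^2"
  have dp: "(?p has_real_derivative (g (x + t *\<^sub>R d) \<bullet> d - g x \<bullet> d - L * t * (norm d)^2)) (at t)" for t
    by (rule derivative_eq_intros line_deriv[OF der] refl | simp)+
  have dq: "(?q has_real_derivative (g (x + t *\<^sub>R d) \<bullet> d - g x \<bullet> d + L * t * (norm d)^2)) (at t)" for t
    by (rule derivative_eq_intros line_deriv[OF der] refl | simp)+
  have "?p 1 \<le> ?p 0"
    apply (rule DERIV_nonpos_imp_nonincreasing[of 0 1 ?p])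
    using dp bnd by force+
  then show "f y \<le> f x + g x \<bullet> (y - x) + L / 2 * (norm (y - x))^2" by (simp add: d_def)
  have "?q 0 \<le> ?q 1"
    apply (rule DERIV_nonneg_imp_nondecreasing[of 0 1 ?q])
    using dq bnd by force+
  then show "f y \<ge> f x + g x \<bullet> (y - x) - L / 2 * (norm (y - x))^2" by (simp add: d_def)
qed


lemma lsc_ball:
  fixes h :: "'a::real_normed_vector \<Rightarrow> real"
  assumes lsc: "\<And>x e. x \<in> D \<Longrightarrow> e > 0 \<Longrightarrow> eventually (\<lambda>y. h y > h x - e) (at x within D)"
    and "x \<in> D" "e > 0"
  obtains d where "d > 0" "\<And>y. y \<in> D \<Longrightarrow> dist y x < d \<Longrightarrow> h y > h x - e"
proof -
  from lsc[OF assms(2,3)] obtain d where d: "d > 0" "\<forall>y\<in>D. y \<noteq> x \<and> dist y x < d \<longrightarrow> h y > h x - e"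
    unfolding eventually_at by blast
  show ?thesis
    apply (rule that[OF d(1)])
    using d(2) assms(3) by force
qed

lemma lin_lower:
  fixes h :: "'a::real_normed_vector \<Rightarrow> real"
  assumes cD: "convex D" and ch: "convex_on D h"
    and lsc: "\<And>x e. x \<in> D \<Longrightarrow> e > 0 \<Longrightarrow> eventually (\<lambda>y. h y > h x - e) (at x within D)"
    and y0: "y0 \<in> D"
  shows "\<exists>c r. r \<ge> 0 \<and> (\<forall>y\<in>D. h y \<ge> c - r * norm (y - y0))"
proof -
  obtain d where d: "d > 0" "\<And>y. y \<in> D \<Longrightarrow> dist y y0 < d \<Longrightarrow> h y > h y0 - 1"
    using lsc_ball[OF lsc y0, of 1] by auto
  have "h y \<ge> (h y0 - 1) - (2 / d) * norm (y - y0)" if yD: "y \<in> D" for y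
  proof (cases "norm (y - y0) < d / 2")
    case True
    then have "dist y y0 < d" using d(1) by (simp add: dist_norm)
    then have "h y > h y0 - 1" using d(2)[OF yD] by simp
    moreover have "(2 / d) * norm (y - y0) \<ge> 0" using d(1) by simp
    ultimately show ?thesis by linarith
  next
    case False
    define t where "t = d / (2 * norm (y - y0))"
    have np: "norm (y - y0) > 0" using False d(1) by linarith
    have t0: "t > 0" "t \<le> 1" using np False d(1) by (auto simp: t_def field_simps)
    define w where "w = (1 - t) *\<^sub>R y0 + t *\<^sub>R y"
    have wD: "w \<in> D" using cD y0 yD t0 unfolding w_def by (simp add: convex_def)
    have "w - y0 = t *\<^sub>R (y - y0)" by (simp add: w_def algebra_simps)
    then have "dist w y0 = t * norm (y - y0)" using t0 by (simp add: dist_norm)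
    also have "\<dots> = d / 2" using np by (simp add: t_def)
    finally have "dist w y0 < d" using d(1) by simp
    then have hw: "h w > h y0 - 1" using d(2) wD by blast
    have "h w \<le> (1 - t) * h y0 + t * h y"
      unfolding w_def by (rule convex_onD[OF ch]) (use t0 y0 yD in auto)
    then have "t * h y > t * h y0 - 1" using hw by (simp add: algebra_simps)
    then have "h y > h y0 - 1 / t" using t0 by (simp add: field_simps)
    moreover have "1 / t = (2 / d) * norm (y - y0)" using np d(1) by (simp add: t_def field_simps)
    moreover have "(1::real) \<ge> 0" by simp
    ultimately show ?thesis by linarith
  qed
  then show ?thesis using d(1) by (intro exI[of _ "h y0 - 1"] exI[of _ "2 / d"]) auto
qed


lemma argmin_exists:
  fixes h :: "'a::euclidean_space \<Rightarrow> real"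
  assumes clD: "closed D" and cD: "convex D" and ch: "convex_on D h"
    and lsc: "\<And>x e. x \<in> D \<Longrightarrow> e > 0 \<Longrightarrow> eventually (\<lambda>y. h y > h x - e) (at x within D)"
    and ne: "D \<noteq> {}" and eta: "\<eta> > 0"
  shows "\<exists>y\<in>D. \<forall>z\<in>D. h y + (norm (y - u))^2 / (2 * \<eta>) \<le> h z + (norm (z - u))^2 / (2 * \<eta>)"
proof -
  define \<phi> where "\<phi> y = h y + (norm (y - u))^2 / (2 * \<eta>)" for y
  obtain y0 where y0: "y0 \<in> D" using ne by blast
  obtain c r where cr: "r \<ge> 0" "\<And>y. y \<in> D \<Longrightarrow> h y \<ge> c - r * norm (y - y0)"
    using lin_lower[OF cD ch lsc y0] by blast
  have quad: "t^2 / (2 * \<eta>) - r * t \<ge> - \<eta> * r^2 / 2" for t :: real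
  proof -
    have "0 \<le> (t - \<eta> * r)^2" by simp
    then have "0 \<le> t^2 - 2 * \<eta> * r * t + \<eta>^2 * r^2" by (simp add: power2_eq_square algebra_simps)
    then have "0 \<le> (t^2 - 2 * \<eta> * r * t + \<eta>^2 * r^2) / (2 * \<eta>)" using eta by simp
    also have "\<dots> = t^2 / (2 * \<eta>) - r * t + \<eta> * r^2 / 2" using eta
      by (simp add: field_simps power2_eq_square)
    finally show ?thesis by simp
  qed
  have low: "\<phi> y \<ge> c - r * norm (u - y0) + ((norm (y - u))^2 / (2 * \<eta>) - r * norm (y - u))" if "y \<in> D" for y
  proof -
    have "norm (y - y0) \<le> norm (y - u) + norm (u - y0)" using norm_triangle_ineq[of "y - u" "u - y0"] by simp
    then have "r * norm (y - y0) \<le> r * norm (y - u) + r * norm (u - y0)"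
      using cr(1) by (metis distrib_left mult_left_mono)
    then show ?thesis using cr(2)[OF that] unfolding \<phi>_def by linarith
  qed
  define B where "B = c - r * norm (u - y0) - \<eta> * r^2 / 2"
  have lowB: "\<phi> y \<ge> B" if "y \<in> D" for y using low[OF that] quad[of "norm (y - u)"] unfolding B_def by linarith
  have bdd: "bdd_below (\<phi> ` D)" unfolding bdd_below_def using lowB by blast
  define I where "I = Inf (\<phi> ` D)"
  have Ile: "I \<le> \<phi> y" if "y \<in> D" for y unfolding I_def using bdd that by (simp add: cInf_lower)
  have "\<exists>y\<in>D. \<phi> y < I + 1 / real (Suc k)" for k
  proof (rule ccontr)
    assume "\<not> ?thesis"
    then have "\<forall>y\<in>D. I + 1 / real (Suc k) \<le> \<phi> y" by auto
    then have "I + 1 / real (Suc k) \<le> I" unfolding I_def using ne by (intro cINF_greatest) auto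
    then show False by simp
  qed
  then obtain Y where Y: "\<And>k. Y k \<in> D" "\<And>k. \<phi> (Y k) < I + 1 / real (Suc k)" by metis
  define C where "C = \<phi> y0 + 1 - c + r * norm (u - y0)"
  define A0 where "A0 = max 0 C"
  define R where "R = max 1 (2 * \<eta> * (A0 + r))"
  have YR: "norm (Y k - u) \<le> R" for k
  proof -
    define t where "t = norm (Y k - u)"
    have "\<phi> (Y k) < I + 1" using Y(2)[of k] proof -
      have "1 / real (Suc k) \<le> 1" by simp
      then show ?thesis using Y(2)[of k] by linarith
    qed
    then have "\<phi> (Y k) < \<phi> y0 + 1" using Ile[OF y0] by linarith
    then have tA: "t^2 / (2 * \<eta>) - r * t \<le> C" using low[OF Y(1)[of k]] unfolding C_def t_def by linarith
    show ?thesis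
    proof (cases "t \<le> 1")
      case True then show ?thesis unfolding R_def t_def by linarith
    next
      case False
      have "t^2 / (2 * \<eta>) \<le> C + r * t" using tA by linarith
      then have "t^2 \<le> (C + r * t) * (2 * \<eta>)" using eta by (simp add: pos_divide_le_eq)
      then have "t^2 \<le> 2 * \<eta> * C + 2 * \<eta> * r * t" by (simp add: algebra_simps)
      also have "\<dots> \<le> 2 * \<eta> * A0 * t + 2 * \<eta> * r * t"
      proof -
        have A0: "A0 \<ge> 0" "C \<le> A0" unfolding A0_def by auto
        have "A0 * 1 \<le> A0 * t" by (rule mult_left_mono) (use False A0 in auto)
        then have "C \<le> A0 * t" using A0 by linarith
        then show ?thesis using eta by (simp add: mult.assoc)
      qed
      finally have "t * t \<le> (2 * \<eta> * (A0 + r)) * t" by (simp add: power2_eq_square algebra_simps)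
      then have "t \<le> 2 * \<eta> * (A0 + r)" using False by (intro mult_right_le_imp_le[of t t]) simp_all
      then show ?thesis unfolding R_def t_def by linarith
    qed
  qed
  have comp: "compact (D \<inter> cball u R)" using clD by (intro closed_Int_compact) auto
  have "\<forall>k. Y k \<in> D \<inter> cball u R" using Y(1) YR by (auto simp: dist_norm norm_minus_commute)
  then obtain l s where ls: "l \<in> D \<inter> cball u R" "strict_mono (s :: nat \<Rightarrow> nat)" "(Y \<circ> s) \<longlonglongrightarrow> l"
    using seq_compactE[OF compact_imp_seq_compact[OF comp]] by metis
  have lD: "l \<in> D" using ls(1) by simp
  have "\<phi> l \<le> I"
  proof (rule ccontr)
    assume "\<not> \<phi> l \<le> I"
    define e where "e = \<phi> l - I"
    have e: "e > 0" using \<open>\<not> \<phi> l \<le> I\<close> unfolding e_def by simp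
    obtain d where d: "d > 0" "\<And>y. y \<in> D \<Longrightarrow> dist y l < d \<Longrightarrow> h y > h l - e / 3"
      using lsc_ball[OF lsc lD, of "e/3"] e by auto
    have ev1: "eventually (\<lambda>k. dist ((Y \<circ> s) k) l < d) sequentially"
      using ls(3) d(1) by (rule tendstoD)
    have "((\<lambda>k. (norm ((Y \<circ> s) k - u))^2 / (2 * \<eta>)) \<longlongrightarrow> (norm (l - u))^2 / (2 * \<eta>)) sequentially"
      using eta ls(3) by (auto intro!: tendsto_intros simp: comp_def)
    then have ev2: "eventually (\<lambda>k. (norm ((Y \<circ> s) k - u))^2 / (2 * \<eta>) > (norm (l - u))^2 / (2 * \<eta>) - e / 3) sequentially"
      by (rule order_tendstoD) (use e in simp)
    obtain N where N: "1 / real (Suc N) < e / 3"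
      using reals_Archimedean[of "e/3"] e by (auto simp: inverse_eq_divide)
    have ev3: "eventually (\<lambda>k. 1 / real (Suc (s k)) < e / 3) sequentially"
    proof (rule eventually_sequentiallyI[of N])
      fix k assume "N \<le> k"
      then have "N \<le> s k" using seq_suble[OF ls(2), of k] by linarith
      then have "1 / real (Suc (s k)) \<le> 1 / real (Suc N)" by (simp add: frac_le)
      then show "1 / real (Suc (s k)) < e / 3" using N by linarith
    qed
    obtain k where k: "dist ((Y \<circ> s) k) l < d"
      "(norm ((Y \<circ> s) k - u))^2 / (2 * \<eta>) > (norm (l - u))^2 / (2 * \<eta>) - e / 3"
      "1 / real (Suc (s k)) < e / 3"
      using eventually_happens'[OF _ eventually_conj[OF ev1 eventually_conj[OF ev2 ev3]]] by auto
    have "h (Y (s k)) > h l - e / 3" using d(2)[OF Y(1)] k(1) by simp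
    then have "\<phi> (Y (s k)) > \<phi> l - 2 * e / 3" using k(2) unfolding \<phi>_def by simp
    moreover have "\<phi> (Y (s k)) < I + e / 3" using Y(2)[of "s k"] k(3) by simp
    moreover have "\<phi> l - 2 * e / 3 = I + e / 3" unfolding e_def by (simp add: field_simps)
    ultimately show False by linarith
  qed
  then show ?thesis using lD Ile unfolding \<phi>_def by (meson order_trans)
qed


locale hD =
  fixes h :: "'a::euclidean_space \<Rightarrow> real" and D :: "'a set"
  assumes clD: "closed D" and cD: "convex D" and ch: "convex_on D h"
    and lsc: "\<And>x e. x \<in> D \<Longrightarrow> e > 0 \<Longrightarrow> eventually (\<lambda>y. h y > h x - e) (at x within D)"
    and ne: "D \<noteq> {}"
begin

lemma prox_min:
  assumes eta: "\<eta> > 0"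
  shows "prox h D \<eta> u \<in> D"
    "\<And>z. z \<in> D \<Longrightarrow> h (prox h D \<eta> u) + (norm (prox h D \<eta> u - u))^2 / (2 * \<eta>) \<le> h z + (norm (z - u))^2 / (2 * \<eta>)"
proof -
  obtain y where y: "y \<in> D" "\<forall>z\<in>D. h y + (norm (y - u))^2 / (2 * \<eta>) \<le> h z + (norm (z - u))^2 / (2 * \<eta>)"
    using argmin_exists[OF clD cD ch lsc ne eta] by blast
  have "is_arg_min (\<lambda>y. h y + (norm (y - u))^2 / (2 * \<eta>)) (\<lambda>y. y \<in> D) (prox h D \<eta> u)"
    unfolding prox_def arg_min_def
    by (rule someI[of _ y]) (use y in \<open>auto simp: is_arg_min_linorder\<close>)
  then show "prox h D \<eta> u \<in> D"
    "\<And>z. z \<in> D \<Longrightarrow> h (prox h D \<eta> u) + (norm (prox h D \<eta> u - u))^2 / (2 * \<eta>) \<le> h z + (norm (z - u))^2 / (2 * \<eta>)"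
    by (auto simp: is_arg_min_linorder)
qed

lemma norm_add_sq:
  fixes p q :: 'a
  shows "(norm (p + q))^2 = (norm p)^2 + (norm q)^2 + 2 * (p \<bullet> q)"
  unfolding power2_norm_eq_inner by (simp add: inner_add_left inner_add_right inner_commute[of q p])

lemma small_param:
  fixes a c :: real
  assumes "c \<ge> 0" "\<And>s. 0 < s \<Longrightarrow> s \<le> 1 \<Longrightarrow> 0 \<le> a + s * c"
  shows "0 \<le> a"
proof (rule ccontr)
  assume "\<not> 0 \<le> a"
  then have a: "a < 0" by simp
  show False
  proof (cases "c = 0")
    case True then show False using assms(2)[of 1] a by simp
  next
    case False
    then have c: "c > 0" using assms(1) by simp
    define s where "s = min 1 (- a / (2 * c))"
    have "- a / (2 * c) > 0" using divide_neg_pos[of a "2 * c"] a c by simp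
    then have s: "0 < s" "s \<le> 1" by (auto simp: s_def)
    have "s * c \<le> (- a / (2 * c)) * c" using c by (intro mult_right_mono) (auto simp: s_def)
    also have "\<dots> = - a / 2" using c by simp
    finally show False using assms(2)[OF s] a by linarith
  qed
qed

lemma prox_vi:
  fixes u :: 'a
  assumes eta: "\<eta> > 0" and z: "z \<in> D"
  defines "y \<equiv> prox h D \<eta> u"
  shows "h z \<ge> h y + ((u - y) \<bullet> (z - y)) / \<eta>"
proof -
  have yD: "y \<in> D" using prox_min(1)[OF eta] by (simp add: y_def)
  have key: "0 \<le> (h z - h y + ((y - u) \<bullet> (z - y)) / \<eta>) + s * ((norm (z - y))^2 / (2 * \<eta>))"
    if s: "0 < s" "s \<le> 1" for s
  proof -
    define w where "w = (1 - s) *\<^sub>R y + s *\<^sub>R z"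
    have wD: "w \<in> D" using cD yD z s unfolding w_def by (simp add: convex_def)
    have m: "h y + (norm (y - u))^2 / (2 * \<eta>) \<le> h w + (norm (w - u))^2 / (2 * \<eta>)"
      using prox_min(2)[OF eta wD] by (simp add: y_def)
    have hw: "h w \<le> (1 - s) * h y + s * h z"
      unfolding w_def by (rule convex_onD[OF ch]) (use s yD z in auto)
    have wu: "w - u = (y - u) + s *\<^sub>R (z - y)" by (simp add: w_def algebra_simps)
    have nw: "(norm (w - u))^2 = (norm (y - u))^2 + 2 * s * ((y - u) \<bullet> (z - y)) + s^2 * (norm (z - y))^2"
    proof -
      have "(norm (w - u))^2 = (norm ((y - u) + s *\<^sub>R (z - y)))^2" by (simp only: wu)
      also have "\<dots> = (norm (y - u))^2 + 2 * s * ((y - u) \<bullet> (z - y)) + s^2 * (norm (z - y))^2"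
        using norm_add_sq[of "y - u" "s *\<^sub>R (z - y)"] s by (simp add: power_mult_distrib)
      finally show ?thesis .
    qed
    have "0 \<le> s * (h z - h y) + (2 * s * ((y - u) \<bullet> (z - y)) + s^2 * (norm (z - y))^2) / (2 * \<eta>)"
    proof -
      have "(norm (w - u))^2 / (2 * \<eta>) = (norm (y - u))^2 / (2 * \<eta>) + (2 * s * ((y - u) \<bullet> (z - y)) + s^2 * (norm (z - y))^2) / (2 * \<eta>)"
        unfolding nw by (simp add: add_divide_distrib)
      then show ?thesis using m hw by (simp add: algebra_simps)
    qed
    also have "\<dots> = s * ((h z - h y + ((y - u) \<bullet> (z - y)) / \<eta>) + s * ((norm (z - y))^2 / (2 * \<eta>)))"
      using eta by (simp add: field_simps power2_eq_square)
    finally show ?thesis using s by (simp add: zero_le_mult_iff)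
  qed
  have "0 \<le> h z - h y + ((y - u) \<bullet> (z - y)) / \<eta>"
    by (rule small_param[OF _ key]; use eta in auto)
  moreover have "((y - u) \<bullet> (z - y)) / \<eta> = - (((u - y) \<bullet> (z - y)) / \<eta>)" 
  proof -
    have "y - u = - (u - y)" by simp
    then show ?thesis by (simp only: inner_minus_left minus_divide_left)
  qed
  ultimately show ?thesis by linarith
qed

lemma norm_sq_split:
  fixes x y z :: "'a"
  shows "(norm (z - x))^2 = (norm (z - y))^2 + (norm (y - x))^2 + 2 * ((z - y) \<bullet> (y - x))"
proof -
  have "z - x = (z - y) + (y - x)" by simp
  then have "(norm (z - x))^2 = (norm ((z - y) + (y - x)))^2" by metis
  also have "\<dots> = (norm (z - y))^2 + (norm (y - x))^2 + 2 * ((z - y) \<bullet> (y - x))"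
    by (rule norm_add_sq)
  finally show ?thesis .
qed

lemma three_point:
  fixes x v :: 'a
  assumes eta: "\<eta> > 0" and z: "z \<in> D"
  defines "y \<equiv> prox h D \<eta> (x - \<eta> *\<^sub>R v)"
  shows "h y + v \<bullet> (y - x) + (norm (y - x))^2 / (2 * \<eta>)
         \<le> h z + v \<bullet> (z - x) + (norm (z - x))^2 / (2 * \<eta>) - (norm (z - y))^2 / (2 * \<eta>)"
proof -
  have vi: "h z \<ge> h y + (((x - \<eta> *\<^sub>R v) - y) \<bullet> (z - y)) / \<eta>"
    using prox_vi[OF eta z, of "x - \<eta> *\<^sub>R v"] by (simp add: y_def)
  have e1: "(((x - \<eta> *\<^sub>R v) - y) \<bullet> (z - y)) / \<eta> = ((x - y) \<bullet> (z - y)) / \<eta> - v \<bullet> (z - y)"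
    using eta by (simp add: inner_diff_left inner_add_left field_simps)
  have e2: "(norm (z - x))^2 = (norm (z - y))^2 + (norm (y - x))^2 + 2 * ((z - y) \<bullet> (y - x))"
    by (rule norm_sq_split)
  have e3: "(z - y) \<bullet> (y - x) = - ((x - y) \<bullet> (z - y))"
    by (simp add: inner_commute inner_diff_left inner_diff_right)
  have e4: "v \<bullet> (z - x) = v \<bullet> (z - y) + v \<bullet> (y - x)" by (simp add: inner_diff_right)
  have "(norm (z - x))^2 / (2 * \<eta>) - (norm (z - y))^2 / (2 * \<eta>) - (norm (y - x))^2 / (2 * \<eta>)
        = - ((x - y) \<bullet> (z - y)) / \<eta>"
    using eta unfolding e2 e3 by (simp add: field_simps)
  then show ?thesis using vi e1 e4 by linarith
qed

end

abbreviation E :: "'b pmf \<Rightarrow> ('b \<Rightarrow> real) \<Rightarrow> real" where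
  "E p f \<equiv> measure_pmf.expectation p f"

lemma E_as_sum:
  assumes "finite (set_pmf p)"
  shows "E p f = (\<Sum>a\<in>set_pmf p. pmf p a * f a)"
  using assms by (subst integral_measure_pmf[of "set_pmf p"]) auto

lemma E_bind:
  assumes fin: "finite (set_pmf p)" and fin2: "\<And>x. x \<in> set_pmf p \<Longrightarrow> finite (set_pmf (q x))"
  shows "E (bind_pmf p q) H = E p (\<lambda>x. E (q x) H)"
  using pmf_expectation_bind[OF fin fin2 order_refl, where h = H] E_as_sum[OF fin, of "\<lambda>x. E (q x) H"]
  by simp

lemma E_bind_return:
  "E (bind_pmf p (\<lambda>x. return_pmf (g x))) H = E p (\<lambda>x. H (g x))"
  by (simp add: map_pmf_def[symmetric])

lemma E_mono:
  assumes fin: "finite (set_pmf p)" and le: "\<And>x. x \<in> set_pmf p \<Longrightarrow> f x \<le> g x"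
  shows "E p f \<le> E p g"
  unfolding E_as_sum[OF fin] by (intro sum_mono mult_left_mono le) auto

lemma E_add:
  assumes fin: "finite (set_pmf p)"
  shows "E p (\<lambda>x. f x + g x) = E p f + E p g"
  unfolding E_as_sum[OF fin] by (simp add: distrib_left sum.distrib)

lemma E_diff:
  assumes fin: "finite (set_pmf p)"
  shows "E p (\<lambda>x. f x - g x) = E p f - E p g"
  unfolding E_as_sum[OF fin] by (simp add: right_diff_distrib sum_subtractf)

lemma E_cmult:
  assumes fin: "finite (set_pmf p)"
  shows "E p (\<lambda>x. c * f x) = c * E p f"
  unfolding E_as_sum[OF fin] by (simp add: sum_distrib_left algebra_simps)

lemma E_const: "E p (\<lambda>x. c) = c"
  by simp

lemma E_nonneg:
  assumes fin: "finite (set_pmf p)" and le: "\<And>x. x \<in> set_pmf p \<Longrightarrow> 0 \<le> f x"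
  shows "0 \<le> E p f"
  using E_mono[OF fin le] by simp

lemma finite_bind:
  assumes "finite (set_pmf p)" "\<And>x. x \<in> set_pmf p \<Longrightarrow> finite (set_pmf (q x))"
  shows "finite (set_pmf (bind_pmf p q))"
  using assms by simp

lemma E_pmf_of_set:
  assumes "finite A" "A \<noteq> {}"
  shows "E (pmf_of_set A) f = (\<Sum>a\<in>A. f a) / real (card A)"
  using assms by (simp add: integral_pmf_of_set)


lemma norm_add_sq':
  fixes p q :: "'a::real_inner"
  shows "(norm (p + q))^2 = (norm p)^2 + (norm q)^2 + 2 * (p \<bullet> q)"
  unfolding power2_norm_eq_inner by (simp add: inner_add_left inner_add_right inner_commute[of q p])

lemma sum_sq_center:
  fixes \<zeta> :: "nat \<Rightarrow> 'a::real_inner"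
  assumes "(\<Sum>i<n. \<zeta> i) = 0"
  shows "(\<Sum>i<n. (norm (\<zeta> i + c))^2) = (\<Sum>i<n. (norm (\<zeta> i))^2) + real n * (norm c)^2"
proof -
  have "(\<Sum>i<n. (norm (\<zeta> i + c))^2) = (\<Sum>i<n. (norm (\<zeta> i))^2 + (norm c)^2 + 2 * (\<zeta> i \<bullet> c))"
    by (simp add: norm_add_sq')
  also have "\<dots> = (\<Sum>i<n. (norm (\<zeta> i))^2) + real n * (norm c)^2 + 2 * ((\<Sum>i<n. \<zeta> i) \<bullet> c)"
    by (simp add: sum.distrib sum_distrib_left inner_sum_left)
  finally show ?thesis using assms by simp
qed

lemma sum_lists_sq:
  fixes \<zeta> :: "nat \<Rightarrow> 'a::real_inner"
  assumes z: "(\<Sum>i<n. \<zeta> i) = 0"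
  shows "real n * (\<Sum>xs\<in>{xs. set xs \<subseteq> {..<n} \<and> length xs = k}. (norm (sum_list (map \<zeta> xs)))^2)
         = real k * real n ^ k * (\<Sum>i<n. (norm (\<zeta> i))^2)"
proof (induction k)
  case 0
  have "{xs. set xs \<subseteq> {..<n} \<and> length xs = 0} = {[]}" by auto
  then show ?case by simp
next
  case (Suc k)
  define W where "W = {xs. set xs \<subseteq> {..<n} \<and> length xs = k}"
  define Q where "Q = (\<Sum>i<n. (norm (\<zeta> i))^2)"
  have fW: "finite W" unfolding W_def by (simp add: finite_lists_length_eq)
  have cW: "card W = n ^ k" unfolding W_def by (simp add: card_lists_length_eq)
  have "(\<Sum>xs\<in>{xs. set xs \<subseteq> {..<n} \<and> length xs = Suc k}. (norm (sum_list (map \<zeta> xs)))^2)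
      = (\<Sum>xs\<in>(\<lambda>(xs, i). i # xs) ` (W \<times> {..<n}). (norm (sum_list (map \<zeta> xs)))^2)"
    unfolding W_def lists_length_Suc_eq ..
  also have "\<dots> = (\<Sum>(xs, i)\<in>W \<times> {..<n}. (norm (\<zeta> i + sum_list (map \<zeta> xs)))^2)"
    by (subst sum.reindex[OF inj_split_Cons]) (simp add: case_prod_unfold)
  also have "\<dots> = (\<Sum>xs\<in>W. \<Sum>i<n. (norm (\<zeta> i + sum_list (map \<zeta> xs)))^2)"
    by (rule sum.cartesian_product[symmetric])
  also have "\<dots> = (\<Sum>xs\<in>W. Q + real n * (norm (sum_list (map \<zeta> xs)))^2)"
    unfolding Q_def by (intro sum.cong refl sum_sq_center z)
  also have "\<dots> = real (n ^ k) * Q + real n * (\<Sum>xs\<in>W. (norm (sum_list (map \<zeta> xs)))^2)"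
    using cW by (simp add: sum.distrib sum_distrib_left)
  also have "\<dots> = real (n ^ k) * Q + real k * real n ^ k * Q"
    using Suc.IH unfolding W_def Q_def by simp
  finally show ?case unfolding Q_def by (simp add: algebra_simps)
qed

lemma sum_list_map_minus_const:
  fixes w :: "nat \<Rightarrow> 'a::real_vector"
  shows "sum_list (map (\<lambda>i. w i - c) xs) = sum_list (map w xs) - real (length xs) *\<^sub>R c"
  by (induct xs) (auto simp: algebra_simps)

locale svrg = hD h D for h :: "'a::euclidean_space \<Rightarrow> real" and D +
  fixes n :: nat and fs :: "nat \<Rightarrow> 'a \<Rightarrow> real" and gf :: "nat \<Rightarrow> 'a \<Rightarrow> 'a" and L :: real
  assumes n_pos: "n \<ge> 1"
    and grad: "\<And>i x. i < n \<Longrightarrow> (fs i has_derivative (\<lambda>v. gf i x \<bullet> v)) (at x)"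
    and L_pos: "L > 0"
    and smooth: "\<And>i x y. i < n \<Longrightarrow> norm (gf i x - gf i y) \<le> L * norm (x - y)"
begin

abbreviation f where "f \<equiv> avg_fun n fs"
abbreviation gr where "gr \<equiv> avg_grad n gf"
abbreviation F where "F x \<equiv> f x + h x"

lemma avg_inner: "gr x \<bullet> d = (1 / real n) * (\<Sum>i<n. gf i x \<bullet> d)"
  by (simp add: avg_grad_def inner_sum_left)

lemma smooth_f:
  shows "f y \<le> f x + gr x \<bullet> (y - x) + L / 2 * (norm (y - x))^2"
    and "f y \<ge> f x + gr x \<bullet> (y - x) - L / 2 * (norm (y - x))^2"
proof -
  have np: "real n > 0" using n_pos by simp
  have up: "fs i y \<le> fs i x + gf i x \<bullet> (y - x) + L / 2 * (norm (y - x))^2"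
    and lo: "fs i y \<ge> fs i x + gf i x \<bullet> (y - x) - L / 2 * (norm (y - x))^2" if "i < n" for i
    using descent_abs[where f="fs i" and g="gf i" and L=L and y=y and x=x] grad[OF that] smooth[OF that] by auto
  have "(\<Sum>i<n. fs i y) \<le> (\<Sum>i<n. fs i x + gf i x \<bullet> (y - x) + L / 2 * (norm (y - x))^2)"
    by (intro sum_mono up) simp
  then have "(1 / real n) * (\<Sum>i<n. fs i y) \<le> (1 / real n) * (\<Sum>i<n. fs i x + gf i x \<bullet> (y - x) + L / 2 * (norm (y - x))^2)"
    using np by (intro mult_left_mono) auto
  moreover have "(1 / real n) * (\<Sum>i<n. fs i x + gf i x \<bullet> (y - x) + L / 2 * (norm (y - x))^2)
     = f x + gr x \<bullet> (y - x) + L / 2 * (norm (y - x))^2"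
    unfolding avg_fun_def avg_inner sum.distrib distrib_left using np by simp
  ultimately show "f y \<le> f x + gr x \<bullet> (y - x) + L / 2 * (norm (y - x))^2"
    unfolding avg_fun_def by simp
  have "(\<Sum>i<n. fs i y) \<ge> (\<Sum>i<n. fs i x + gf i x \<bullet> (y - x) - L / 2 * (norm (y - x))^2)"
    by (intro sum_mono lo) simp
  then have "(1 / real n) * (\<Sum>i<n. fs i y) \<ge> (1 / real n) * (\<Sum>i<n. fs i x + gf i x \<bullet> (y - x) - L / 2 * (norm (y - x))^2)"
    using np by (intro mult_left_mono) auto
  moreover have "(1 / real n) * (\<Sum>i<n. fs i x + gf i x \<bullet> (y - x) - L / 2 * (norm (y - x))^2)
     = f x + gr x \<bullet> (y - x) - L / 2 * (norm (y - x))^2"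
    unfolding avg_fun_def avg_inner sum_subtractf sum.distrib right_diff_distrib distrib_left using np by simp
  ultimately show "f y \<ge> f x + gr x \<bullet> (y - x) - L / 2 * (norm (y - x))^2"
    unfolding avg_fun_def by simp
qed

abbreviation W where "W k \<equiv> {xs. set xs \<subseteq> {..<n} \<and> length xs = k}"

lemma W_fin: "finite (W k)" by (simp add: finite_lists_length_eq)
lemma W_ne: "W k \<noteq> {}"
proof -
  have "replicate k 0 \<in> W k" using n_pos by auto
  then show ?thesis by blast
qed
lemma W_card: "card (W k) = n ^ k" by (simp add: card_lists_length_eq)

lemma set_sample: "set_pmf (sample_indices n b) = W b"
  unfolding sample_indices_def using W_fin W_ne by simp

lemma fin_sample: "finite (set_pmf (sample_indices n b))"
  using set_sample W_fin by simp

lemma variance: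
  assumes b: "b \<ge> 1"
  shows "E (sample_indices n b)
           (\<lambda>I. (norm ((1 / real b) *\<^sub>R sum_list (map (\<lambda>i. gf i x - gf i xt) I) + gr xt - gr x))^2)
         \<le> L^2 / real b * (norm (x - xt))^2"
proof -
  define w where "w i = gf i x - gf i xt" for i
  define c where "c = gr x - gr xt"
  define \<zeta> where "\<zeta> i = w i - c" for i
  have np: "real n > 0" using n_pos by simp
  have bp: "real b > 0" using b by simp
  have cw: "c = (1 / real n) *\<^sub>R (\<Sum>i<n. w i)"
    unfolding c_def w_def avg_grad_def by (simp add: sum_subtractf scaleR_diff_right)
  have z: "(\<Sum>i<n. \<zeta> i) = 0"
    unfolding \<zeta>_def using np by (simp add: sum_subtractf cw sum_constant_scaleR)
  define Q where "Q = (\<Sum>i<n. (norm (\<zeta> i))^2)"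
  have eq: "(1 / real b) *\<^sub>R sum_list (map w I) + gr xt - gr x = (1 / real b) *\<^sub>R sum_list (map \<zeta> I)"
    if "I \<in> W b" for I
  proof -
    have "sum_list (map \<zeta> I) = sum_list (map w I) - real b *\<^sub>R c"
      unfolding \<zeta>_def using that by (simp add: sum_list_map_minus_const)
    then have "(1 / real b) *\<^sub>R sum_list (map \<zeta> I) = (1 / real b) *\<^sub>R sum_list (map w I) - c"
      using bp by (simp add: scaleR_diff_right)
    then show ?thesis by (simp add: c_def algebra_simps)
  qed
  have "E (sample_indices n b) (\<lambda>I. (norm ((1 / real b) *\<^sub>R sum_list (map w I) + gr xt - gr x))^2)
      = (\<Sum>I\<in>W b. (norm ((1 / real b) *\<^sub>R sum_list (map w I) + gr xt - gr x))^2) / real (card (W b))"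
    unfolding sample_indices_def by (rule E_pmf_of_set[OF W_fin W_ne])
  also have "\<dots> = (\<Sum>I\<in>W b. (norm (sum_list (map \<zeta> I)))^2 / (real b)^2) / real n ^ b"
    by (simp add: W_card eq power_divide)
  also have "\<dots> = (1 / real b)^2 * (\<Sum>I\<in>W b. (norm (sum_list (map \<zeta> I)))^2) / real n ^ b"
    by (simp add: sum_divide_distrib power_divide)
  also have "\<dots> = Q / (real b * real n)"
  proof -
    have "(\<Sum>I\<in>W b. (norm (sum_list (map \<zeta> I)))^2) = real b * real n ^ b * Q / real n"
      using sum_lists_sq[OF z, of b] np unfolding Q_def by (simp add: field_simps)
    then show ?thesis using np bp by (simp add: field_simps power2_eq_square)
  qed
  also have "\<dots> \<le> L^2 / real b * (norm (x - xt))^2"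
  proof -
    have "(\<Sum>i<n. (norm (\<zeta> i + c))^2) = Q + real n * (norm c)^2"
      unfolding Q_def by (rule sum_sq_center[OF z])
    moreover have "\<zeta> i + c = w i" for i by (simp add: \<zeta>_def)
    ultimately have "Q \<le> (\<Sum>i<n. (norm (w i))^2)" by simp
    also have "\<dots> \<le> (\<Sum>i<n. (L * norm (x - xt))^2)"
    proof (intro sum_mono)
      fix i assume "i \<in> {..<n}"
      then have "norm (w i) \<le> L * norm (x - xt)" using smooth[of i x xt] by (simp add: w_def)
      then show "(norm (w i))^2 \<le> (L * norm (x - xt))^2" by (intro power_mono) auto
    qed
    also have "\<dots> = real n * (L^2 * (norm (x - xt))^2)" by (simp add: power_mult_distrib)
    finally have "Q / (real b * real n) \<le> real n * (L^2 * (norm (x - xt))^2) / (real b * real n)"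
      using np bp by (intro divide_right_mono) auto
    then show ?thesis using np by (simp add: field_simps)
  qed
  finally show ?thesis unfolding w_def .
qed

end

context svrg
begin

definition xbar where "xbar \<eta> x = prox h D \<eta> (x - \<eta> *\<^sub>R gr x)"
definition G where
  "G \<eta> x = h x - h (xbar \<eta> x) - gr x \<bullet> (xbar \<eta> x - x) - (norm (xbar \<eta> x - x))^2 / (2 * \<eta>)"

lemma G_nonneg:
  assumes eta: "\<eta> > 0" and x: "x \<in> D"
  shows "G \<eta> x \<ge> 0"
proof -
  have "h (xbar \<eta> x) + gr x \<bullet> (xbar \<eta> x - x) + (norm (xbar \<eta> x - x))^2 / (2 * \<eta>)
        \<le> h x + gr x \<bullet> (x - x) + (norm (x - x))^2 / (2 * \<eta>) - (norm (x - xbar \<eta> x))^2 / (2 * \<eta>)"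
    unfolding xbar_def by (rule three_point[OF eta x])
  moreover have "(norm (x - xbar \<eta> x))^2 / (2 * \<eta>) \<ge> 0" using eta by simp
  ultimately show ?thesis unfolding G_def by simp
qed

lemma young:
  fixes a b :: 'a
  assumes eta: "\<eta> > 0"
  shows "a \<bullet> b \<le> \<eta> / 2 * (norm a)^2 + (norm b)^2 / (2 * \<eta>)"
proof -
  have "0 \<le> (norm (\<eta> *\<^sub>R a + (- b)))^2 / (2 * \<eta>)" using eta by simp
  also have "\<dots> = (\<eta>^2 * (norm a)^2 + (norm b)^2 - 2 * \<eta> * (a \<bullet> b)) / (2 * \<eta>)"
    unfolding norm_add_sq' using eta by (simp add: power_mult_distrib)
  also have "\<dots> = \<eta> / 2 * (norm a)^2 + (norm b)^2 / (2 * \<eta>) - a \<bullet> b"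
    using eta by (simp add: field_simps power2_eq_square)
  finally show ?thesis by simp
qed

lemma step_path:
  fixes v :: 'a
  assumes eta: "\<eta> > 0" and x: "x \<in> D"
  defines "y \<equiv> prox h D \<eta> (x - \<eta> *\<^sub>R v)"
  shows "F y \<le> F x - G \<eta> x + \<eta> / 2 * (norm (v - gr x))^2 - (1 / (2 * \<eta>) - L / 2) * (norm (y - x))^2"
proof -
  define xb where "xb = xbar \<eta> x"
  have xbD: "xb \<in> D" unfolding xb_def xbar_def by (rule prox_min(1)[OF eta])
  have tp: "h y + v \<bullet> (y - x) + (norm (y - x))^2 / (2 * \<eta>)
         \<le> h xb + v \<bullet> (xb - x) + (norm (xb - x))^2 / (2 * \<eta>) - (norm (xb - y))^2 / (2 * \<eta>)"
    unfolding y_def by (rule three_point[OF eta xbD])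
  have sm: "f y \<le> f x + gr x \<bullet> (y - x) + L / 2 * (norm (y - x))^2" by (rule smooth_f(1))
  have yg: "(v - gr x) \<bullet> (xb - y) \<le> \<eta> / 2 * (norm (v - gr x))^2 + (norm (xb - y))^2 / (2 * \<eta>)"
    by (rule young[OF eta])
  have id: "gr x \<bullet> (y - x) - v \<bullet> (y - x) + v \<bullet> (xb - x) = gr x \<bullet> (xb - x) + (v - gr x) \<bullet> (xb - y)"
    by (simp add: inner_diff_left inner_diff_right)
  have Gx: "G \<eta> x = h x - h xb - gr x \<bullet> (xb - x) - (norm (xb - x))^2 / (2 * \<eta>)"
    unfolding G_def xb_def ..
  have "(1 / (2 * \<eta>) - L / 2) * (norm (y - x))^2 = (norm (y - x))^2 / (2 * \<eta>) - L / 2 * (norm (y - x))^2"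
    by (simp add: algebra_simps)
  then show ?thesis using tp sm yg id Gx by linarith
qed

lemma svrg_step_eq:
  "svrg_step n gf h D b \<eta> xt g x I =
     prox h D \<eta> (x - \<eta> *\<^sub>R ((1 / real b) *\<^sub>R sum_list (map (\<lambda>i. gf i x - gf i xt) I) + g))"
  unfolding svrg_step_def Let_def ..

lemma step_exp:
  assumes eta: "\<eta> > 0" and x: "x \<in> D" and b: "b \<ge> 1"
  shows "E (sample_indices n b) (\<lambda>I. F (svrg_step n gf h D b \<eta> xt (gr xt) x I)
             + (1 / (2 * \<eta>) - L / 2) * (norm (svrg_step n gf h D b \<eta> xt (gr xt) x I - x))^2)
         \<le> F x - G \<eta> x + \<eta> * L^2 / (2 * real b) * (norm (x - xt))^2"
proof -
  define V where "V I = (1 / real b) *\<^sub>R sum_list (map (\<lambda>i. gf i x - gf i xt) I) + gr xt" for I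
  have "E (sample_indices n b) (\<lambda>I. F (svrg_step n gf h D b \<eta> xt (gr xt) x I)
             + (1 / (2 * \<eta>) - L / 2) * (norm (svrg_step n gf h D b \<eta> xt (gr xt) x I - x))^2)
      \<le> E (sample_indices n b) (\<lambda>I. (F x - G \<eta> x) + \<eta> / 2 * (norm (V I - gr x))^2)"
  proof (rule E_mono[OF fin_sample])
    fix I
    show "F (svrg_step n gf h D b \<eta> xt (gr xt) x I)
             + (1 / (2 * \<eta>) - L / 2) * (norm (svrg_step n gf h D b \<eta> xt (gr xt) x I - x))^2
          \<le> (F x - G \<eta> x) + \<eta> / 2 * (norm (V I - gr x))^2"
      using step_path[OF eta x, of "V I"] unfolding svrg_step_eq V_def by simp
  qed
  also have "\<dots> = (F x - G \<eta> x) + \<eta> / 2 * E (sample_indices n b) (\<lambda>I. (norm (V I - gr x))^2)"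
    by (simp add: E_add[OF fin_sample] E_cmult[OF fin_sample])
  also have "\<dots> \<le> (F x - G \<eta> x) + \<eta> / 2 * (L^2 / real b * (norm (x - xt))^2)"
  proof -
    have "E (sample_indices n b) (\<lambda>I. (norm (V I - gr x))^2) \<le> L^2 / real b * (norm (x - xt))^2"
      using variance[OF b, of x xt] unfolding V_def by (simp add: algebra_simps)
    then show ?thesis using eta by (intro add_left_mono mult_left_mono) auto
  qed
  also have "\<dots> = F x - G \<eta> x + \<eta> * L^2 / (2 * real b) * (norm (x - xt))^2" by simp
  finally show ?thesis .
qed

end

lemma E_cong:
  assumes "finite (set_pmf p)" "\<And>x. x \<in> set_pmf p \<Longrightarrow> f x = g x"
  shows "E p f = E p g"
  using assms by (simp add: E_as_sum)

lemma split_sq: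
  fixes p q :: "'a::real_inner"
  shows "2 * real k * (norm (p + q))^2 \<le> 2 * real k * (2 * real k + 1) * (norm p)^2 + (2 * real k + 1) * (norm q)^2"
proof -
  have "0 \<le> (norm ((2 * real k) *\<^sub>R p + (- q)))^2" by simp
  also have "\<dots> = 4 * real k ^ 2 * (norm p)^2 + (norm q)^2 - 4 * real k * (p \<bullet> q)"
    unfolding norm_add_sq' by (simp add: power_mult_distrib)
  finally have a: "4 * real k * (p \<bullet> q) \<le> 4 * real k ^ 2 * (norm p)^2 + (norm q)^2" by simp
  have "2 * real k * (norm (p + q))^2 = 2 * real k * (norm p)^2 + 2 * real k * (norm q)^2 + 4 * real k * (p \<bullet> q)"
    unfolding norm_add_sq' by (simp add: algebra_simps)
  also have "\<dots> \<le> 2 * real k * (norm p)^2 + 2 * real k * (norm q)^2 + 4 * real k ^ 2 * (norm p)^2 + (norm q)^2"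
    using a by simp
  also have "\<dots> = 2 * real k * (2 * real k + 1) * (norm p)^2 + (2 * real k + 1) * (norm q)^2"
    by (simp add: algebra_simps power2_eq_square)
  finally show ?thesis .
qed

context svrg
begin

lemma step_in_D:
  assumes eta: "\<eta> > 0"
  shows "svrg_step n gf h D b \<eta> xt g x I \<in> D"
  unfolding svrg_step_eq by (rule prox_min(1)[OF eta])

lemma inner_fin: "finite (set_pmf (svrg_inner n gf h D b \<eta> xt g k x))"
  by (induction k arbitrary: x) (auto simp: fin_sample)

lemma inner_set:
  assumes eta: "\<eta> > 0"
  shows "x \<in> D \<Longrightarrow> xs \<in> set_pmf (svrg_inner n gf h D b \<eta> xt g k x) \<Longrightarrow>
           length xs = Suc k \<and> set xs \<subseteq> D \<and> hd xs = x"
proof (induction k arbitrary: x xs)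
  case 0 then show ?case by simp
next
  case (Suc k)
  from Suc.prems obtain I xs' where xs': "xs' \<in> set_pmf (svrg_inner n gf h D b \<eta> xt g k (svrg_step n gf h D b \<eta> xt g x I))"
    "xs = x # xs'" by auto
  have "length xs' = Suc k \<and> set xs' \<subseteq> D \<and> hd xs' = svrg_step n gf h D b \<eta> xt g x I"
    by (rule Suc.IH[OF step_in_D[OF eta] xs'(1)])
  then show ?case using xs'(2) Suc.prems(1) by simp
qed

lemma inner_claim:
  assumes eta: "\<eta> > 0" and b: "b \<ge> 1"
    and cond: "\<And>j. j < k \<Longrightarrow> \<eta> * L^2 / real b * (real j * (2 * real j + 1)) \<le> 1 / (2 * \<eta>) - L / 2"
    and x: "x \<in> D"
  shows "E (svrg_inner n gf h D b \<eta> xt (gr xt) k x) (\<lambda>xs. F (last xs) + sum_list (map (G \<eta>) (take k xs)))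
         \<le> F x + \<eta> * L^2 / real b * real k * (norm (x - xt))^2"
  using cond x
proof (induction k arbitrary: x)
  case 0 then show ?case by simp
next
  case (Suc k)
  define a where "a = \<eta> * L^2 / (2 * real b)"
  define A where "A = 1 / (2 * \<eta>) - L / 2"
  define Y where "Y I = svrg_step n gf h D b \<eta> xt (gr xt) x I" for I
  define Inn where "Inn I = svrg_inner n gf h D b \<eta> xt (gr xt) k (Y I)" for I
  define \<Phi> where "\<Phi> xs = F (last xs) + sum_list (map (G \<eta>) (take k xs))" for xs
  have YD: "Y I \<in> D" for I unfolding Y_def by (rule step_in_D[OF eta])
  have a0: "a \<ge> 0" unfolding a_def using eta b by simp
  have condk: "2 * a * (real k * (2 * real k + 1)) \<le> A"
    using Suc.prems(1)[of k] unfolding a_def A_def using b by simp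
  have IH: "E (Inn I) \<Phi> \<le> F (Y I) + 2 * a * real k * (norm (Y I - xt))^2" for I
  proof -
    have e: "2 * a * real k = \<eta> * L^2 / real b * real k" unfolding a_def using b by simp
    show ?thesis unfolding e Inn_def \<Phi>_def by (rule Suc.IH[OF _ YD]) (use Suc.prems(1) in auto)
  qed
  have "E (svrg_inner n gf h D b \<eta> xt (gr xt) (Suc k) x)
          (\<lambda>xs. F (last xs) + sum_list (map (G \<eta>) (take (Suc k) xs)))
      = E (sample_indices n b) (\<lambda>I. E (Inn I) (\<lambda>xs. F (last (x # xs)) + sum_list (map (G \<eta>) (take (Suc k) (x # xs)))))"
    unfolding svrg_inner.simps Inn_def Y_def
    by (subst E_bind[OF fin_sample]) (auto simp: inner_fin E_bind_return)
  also have "\<dots> = E (sample_indices n b) (\<lambda>I. E (Inn I) \<Phi> + G \<eta> x)"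
  proof (rule E_cong[OF fin_sample])
    fix I
    have "E (Inn I) (\<lambda>xs. F (last (x # xs)) + sum_list (map (G \<eta>) (take (Suc k) (x # xs))))
        = E (Inn I) (\<lambda>xs. \<Phi> xs + G \<eta> x)"
    proof (rule E_cong)
      show "finite (set_pmf (Inn I))" unfolding Inn_def by (rule inner_fin)
    next
      fix xs assume xs: "xs \<in> set_pmf (Inn I)"
      have "length xs = Suc k" using inner_set[OF eta YD xs[unfolded Inn_def]] by simp
      then have "xs \<noteq> []" by auto
      then show "F (last (x # xs)) + sum_list (map (G \<eta>) (take (Suc k) (x # xs))) = \<Phi> xs + G \<eta> x"
        unfolding \<Phi>_def by simp
    qed
    also have "\<dots> = E (Inn I) \<Phi> + G \<eta> x"
      unfolding Inn_def by (simp add: E_add[OF inner_fin])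
    finally show "E (Inn I) (\<lambda>xs. F (last (x # xs)) + sum_list (map (G \<eta>) (take (Suc k) (x # xs))))
        = E (Inn I) \<Phi> + G \<eta> x" .
  qed
  also have "\<dots> \<le> E (sample_indices n b) (\<lambda>I. (F (Y I) + A * (norm (Y I - x))^2) + (a * (2 * real k + 1) * (norm (x - xt))^2 + G \<eta> x))"
  proof (rule E_mono[OF fin_sample])
    fix I
    have sp: "2 * real k * (norm ((Y I - x) + (x - xt)))^2
        \<le> 2 * real k * (2 * real k + 1) * (norm (Y I - x))^2 + (2 * real k + 1) * (norm (x - xt))^2"
      by (rule split_sq)
    have "2 * a * real k * (norm (Y I - xt))^2 = a * (2 * real k * (norm ((Y I - x) + (x - xt)))^2)"
      by simp
    also have "\<dots> \<le> a * (2 * real k * (2 * real k + 1) * (norm (Y I - x))^2 + (2 * real k + 1) * (norm (x - xt))^2)"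
      using sp a0 by (rule mult_left_mono)
    also have "\<dots> = (2 * a * (real k * (2 * real k + 1))) * (norm (Y I - x))^2 + a * (2 * real k + 1) * (norm (x - xt))^2"
      by (simp add: algebra_simps)
    also have "\<dots> \<le> A * (norm (Y I - x))^2 + a * (2 * real k + 1) * (norm (x - xt))^2"
      using condk by (intro add_right_mono mult_right_mono) auto
    finally have "2 * a * real k * (norm (Y I - xt))^2 \<le> A * (norm (Y I - x))^2 + a * (2 * real k + 1) * (norm (x - xt))^2" .
    then show "E (Inn I) \<Phi> + G \<eta> x \<le> (F (Y I) + A * (norm (Y I - x))^2) + (a * (2 * real k + 1) * (norm (x - xt))^2 + G \<eta> x)"
      using IH[of I] by linarith
  qed
  also have "\<dots> = E (sample_indices n b) (\<lambda>I. F (Y I) + A * (norm (Y I - x))^2) + (a * (2 * real k + 1) * (norm (x - xt))^2 + G \<eta> x)"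
    by (simp add: E_add[OF fin_sample])
  also have "\<dots> \<le> (F x - G \<eta> x + a * (norm (x - xt))^2) + (a * (2 * real k + 1) * (norm (x - xt))^2 + G \<eta> x)"
    using step_exp[OF eta Suc.prems(2) b, of xt] unfolding Y_def A_def a_def by simp
  also have "\<dots> = F x + \<eta> * L^2 / real b * real (Suc k) * (norm (x - xt))^2"
    unfolding a_def using b by (simp add: field_simps)
  finally show ?case .
qed

end

context svrg
begin

lemma outer_fin: "finite (set_pmf (svrg_outer n gf h D b \<eta> m s x))"
  by (induction s arbitrary: x) (auto simp: inner_fin)

lemma outer_set:
  assumes eta: "\<eta> > 0"
  shows "x \<in> D \<Longrightarrow> pts \<in> set_pmf (svrg_outer n gf h D b \<eta> m s x) \<Longrightarrow>
           length pts = s * m \<and> set pts \<subseteq> D"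
proof (induction s arbitrary: x pts)
  case 0 then show ?case by simp
next
  case (Suc s)
  from Suc.prems obtain xs rest where
    xs: "xs \<in> set_pmf (svrg_inner n gf h D b \<eta> x (gr x) m x)"
    and rest: "rest \<in> set_pmf (svrg_outer n gf h D b \<eta> m s (last xs))"
    and pts: "pts = take m xs @ rest" by auto
  have xsp: "length xs = Suc m \<and> set xs \<subseteq> D \<and> hd xs = x" by (rule inner_set[OF eta Suc.prems(1) xs])
  then have "xs \<noteq> []" by auto
  then have "last xs \<in> D" using xsp by auto
  then have "length rest = s * m \<and> set rest \<subseteq> D" by (rule Suc.IH[OF _ rest])
  moreover have "set (take m xs) \<subseteq> D" using xsp by (meson set_take_subset order_trans)
  ultimately show ?case using pts xsp by auto
qed

lemma outer_claim:
  assumes eta: "\<eta> > 0" and b: "b \<ge> 1"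
    and cond: "\<And>j. j < m \<Longrightarrow> \<eta> * L^2 / real b * (real j * (2 * real j + 1)) \<le> 1 / (2 * \<eta>) - L / 2"
    and xs_min: "\<And>y. y \<in> D \<Longrightarrow> F xstar \<le> F y"
  shows "x \<in> D \<Longrightarrow> E (svrg_outer n gf h D b \<eta> m s x) (\<lambda>pts. sum_list (map (G \<eta>) pts)) \<le> F x - F xstar"
proof (induction s arbitrary: x)
  case 0 then show ?case using xs_min[of x] by simp
next
  case (Suc s)
  define Inn where "Inn = svrg_inner n gf h D b \<eta> x (gr x) m x"
  define Out where "Out xs = svrg_outer n gf h D b \<eta> m s (last xs)" for xs
  have lastD: "last xs \<in> D" if "xs \<in> set_pmf Inn" for xs
  proof -
    have xsp: "length xs = Suc m \<and> set xs \<subseteq> D \<and> hd xs = x" by (rule inner_set[OF eta Suc.prems that[unfolded Inn_def]])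
    then have "xs \<noteq> []" by auto
    then show ?thesis using xsp by auto
  qed
  have "E (svrg_outer n gf h D b \<eta> m (Suc s) x) (\<lambda>pts. sum_list (map (G \<eta>) pts))
      = E Inn (\<lambda>xs. E (Out xs) (\<lambda>rest. sum_list (map (G \<eta>) (take m xs)) + sum_list (map (G \<eta>) rest)))"
    unfolding svrg_outer.simps Inn_def Out_def
    by (subst E_bind[OF inner_fin]) (auto simp: outer_fin E_bind_return)
  also have "\<dots> = E Inn (\<lambda>xs. sum_list (map (G \<eta>) (take m xs)) + E (Out xs) (\<lambda>rest. sum_list (map (G \<eta>) rest)))"
    unfolding Out_def by (simp add: E_add[OF outer_fin])
  also have "\<dots> \<le> E Inn (\<lambda>xs. (F (last xs) + sum_list (map (G \<eta>) (take m xs))) - F xstar)"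
  proof (rule E_mono)
    show "finite (set_pmf Inn)" unfolding Inn_def by (rule inner_fin)
  next
    fix xs assume "xs \<in> set_pmf Inn"
    then have "E (Out xs) (\<lambda>rest. sum_list (map (G \<eta>) rest)) \<le> F (last xs) - F xstar"
      unfolding Out_def by (intro Suc.IH lastD)
    then show "sum_list (map (G \<eta>) (take m xs)) + E (Out xs) (\<lambda>rest. sum_list (map (G \<eta>) rest))
        \<le> (F (last xs) + sum_list (map (G \<eta>) (take m xs))) - F xstar" by simp
  qed
  also have "\<dots> = E Inn (\<lambda>xs. F (last xs) + sum_list (map (G \<eta>) (take m xs))) - F xstar"
    unfolding Inn_def by (simp add: E_diff[OF inner_fin])
  also have "\<dots> \<le> (F x + \<eta> * L^2 / real b * real m * (norm (x - x))^2) - F xstar"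
    unfolding Inn_def using inner_claim[OF eta b cond Suc.prems, where xt=x] by simp
  finally show ?case by simp
qed

lemma PL_G:
  assumes eta: "\<eta> > 0" and mu: "\<mu> \<le> 1 / \<eta>"
    and PL: "is_PL \<mu> f gr h D xstar" and x: "x \<in> D"
  shows "\<mu> * (F x - F xstar) \<le> G \<eta> x / \<eta>"
proof -
  have mu0: "\<mu> > 0" using PL unfolding is_PL_def by simp
  define t where "t = \<mu> * \<eta>"
  have t: "0 < t" "t \<le> 1" using mu0 eta mu by (auto simp: t_def field_simps)
  define \<psi> where "\<psi> y = gr x \<bullet> (y - x) + \<mu> / 2 * (norm (y - x))^2 + h y - h x" for y
  have psi: "\<psi> y \<ge> - G \<eta> x / t" if y: "y \<in> D" for y
  proof -
    define z where "z = (1 - t) *\<^sub>R x + t *\<^sub>R y"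
    have zD: "z \<in> D" using cD x y t unfolding z_def by (simp add: convex_def)
    have tp: "h (xbar \<eta> x) + gr x \<bullet> (xbar \<eta> x - x) + (norm (xbar \<eta> x - x))^2 / (2 * \<eta>)
        \<le> h z + gr x \<bullet> (z - x) + (norm (z - x))^2 / (2 * \<eta>) - (norm (z - xbar \<eta> x))^2 / (2 * \<eta>)"
      unfolding xbar_def by (rule three_point[OF eta zD])
    have zx: "z - x = t *\<^sub>R (y - x)" by (simp add: z_def algebra_simps)
    have hz: "h z \<le> (1 - t) * h x + t * h y"
      unfolding z_def by (rule convex_onD[OF ch]) (use t x y in auto)
    have nz: "(norm (z - x))^2 = t^2 * (norm (y - x))^2"
      unfolding zx norm_scaleR power_mult_distrib using t by simp
    have n2: "(norm (z - x))^2 / (2 * \<eta>) = t * (\<mu> / 2 * (norm (y - x))^2)"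
      unfolding nz using eta by (simp add: t_def power2_eq_square field_simps)
    have "- G \<eta> x \<le> h z - h x + gr x \<bullet> (z - x) + (norm (z - x))^2 / (2 * \<eta>)"
    proof -
      have "(norm (z - xbar \<eta> x))^2 / (2 * \<eta>) \<ge> 0" using eta by simp
      then show ?thesis using tp unfolding G_def by linarith
    qed
    also have "\<dots> \<le> t * \<psi> y"
      unfolding \<psi>_def n2 using hz unfolding zx by (simp add: algebra_simps)
    finally have "- G \<eta> x \<le> t * \<psi> y" .
    then have "- G \<eta> x / t \<le> (t * \<psi> y) / t" using t by (intro divide_right_mono) auto
    then show ?thesis using t by simp
  qed
  have "- G \<eta> x / t \<le> (INF y\<in>D. gr x \<bullet> (y - x) + \<mu> / 2 * (norm (y - x))^2 + h y - h x)"
    using ne psi unfolding \<psi>_def by (intro cINF_greatest) auto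
  then have i1: "2 * \<mu> * (- G \<eta> x / t) \<le> 2 * \<mu> * (INF y\<in>D. gr x \<bullet> (y - x) + \<mu> / 2 * (norm (y - x))^2 + h y - h x)"
    using mu0 by (intro mult_left_mono) auto
  have i2: "Dh gr h D x \<mu> = - (2 * \<mu> * (INF y\<in>D. gr x \<bullet> (y - x) + \<mu> / 2 * (norm (y - x))^2 + h y - h x))"
    unfolding Dh_def by simp
  have i3: "2 * \<mu> * (- G \<eta> x / t) = - (2 * \<mu> * (G \<eta> x / t))" by simp
  have "Dh gr h D x \<mu> \<le> 2 * \<mu> * (G \<eta> x / t)"
    using i1 i2 i3 by linarith
  moreover have "\<mu> * (F x - F xstar) \<le> 1/2 * Dh gr h D x \<mu>"
    using PL x unfolding is_PL_def by simp
  moreover have "2 * \<mu> * (G \<eta> x / t) = 2 * (G \<eta> x / \<eta>)" using mu0 eta by (simp add: t_def)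
  ultimately show ?thesis by simp
qed

end

context svrg
begin

lemma const_case:
  assumes PL: "is_PL \<mu> f gr h D xstar" and muL: "\<mu> > L"
    and xs_min: "\<And>y. y \<in> D \<Longrightarrow> F xstar \<le> F y" and x: "x \<in> D"
  shows "F x = F xstar"
proof (rule ccontr)
  assume neq: "F x \<noteq> F xstar"
  define \<delta> where "\<delta> = F x - F xstar"
  have d0: "\<delta> > 0" using xs_min[OF x] neq unfolding \<delta>_def by simp
  have mu0: "\<mu> > 0" using PL unfolding is_PL_def by simp
  define \<psi> where "\<psi> y = gr x \<bullet> (y - x) + \<mu> / 2 * (norm (y - x))^2 + h y - h x" for y
  define Iv where "Iv = (INF y\<in>D. \<psi> y)"
  have "\<mu> * \<delta> \<le> 1/2 * Dh gr h D x \<mu>" using PL x unfolding is_PL_def \<delta>_def by simp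
  also have "1/2 * Dh gr h D x \<mu> = \<mu> * (- Iv)" unfolding Dh_def Iv_def \<psi>_def by simp
  finally have "\<mu> * \<delta> \<le> \<mu> * (- Iv)" .
  then have "\<delta> \<le> - Iv" using mu0 by (rule mult_left_le_imp_le)
  then have Iv: "Iv \<le> - \<delta>" by simp
  obtain d where d: "d > 0" "\<And>y. y \<in> D \<Longrightarrow> dist y x < d \<Longrightarrow> h y > h x - \<delta> / 4"
    using lsc_ball[OF lsc x, of "\<delta> / 4"] d0 by auto
  define r where "r = min d (\<delta> / (4 * (norm (gr x) + 1)))"
  have "0 < norm (gr x) + 1" using norm_ge_zero[of "gr x"] by linarith
  then have q4: "0 < 4 * (norm (gr x) + 1)" by simp
  have "\<delta> / (4 * (norm (gr x) + 1)) > 0" using d0 q4 by (rule divide_pos_pos)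
  then have r0: "r > 0" using d by (auto simp: r_def)
  define \<epsilon> where "\<epsilon> = min (\<delta> / 4) ((\<mu> - L) / 2 * r^2)"
  have e0: "\<epsilon> > 0" using d0 muL r0 by (auto simp: \<epsilon>_def)
  have "Iv < - \<delta> + \<epsilon>" using Iv e0 by simp
  then obtain y where y: "y \<in> D" "\<psi> y < - \<delta> + \<epsilon>"
    unfolding Iv_def using cInf_lessD[of "\<psi> ` D" "- \<delta> + \<epsilon>"] ne by auto
  have low: "\<psi> y \<ge> F y - F x + (\<mu> - L) / 2 * (norm (y - x))^2"
  proof -
    have "f y \<le> f x + gr x \<bullet> (y - x) + L / 2 * (norm (y - x))^2" by (rule smooth_f(1))
    moreover have "(\<mu> - L) / 2 * (norm (y - x))^2 = \<mu> / 2 * (norm (y - x))^2 - L / 2 * (norm (y - x))^2"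
      by (simp add: field_simps)
    ultimately show ?thesis unfolding \<psi>_def by linarith
  qed
  have "(\<mu> - L) / 2 * (norm (y - x))^2 < (\<mu> - L) / 2 * r^2"
  proof -
    have "(\<mu> - L) / 2 * (norm (y - x))^2 < \<epsilon>" using low y(2) xs_min[OF y(1)] unfolding \<delta>_def by linarith
    also have "\<epsilon> \<le> (\<mu> - L) / 2 * r^2" unfolding \<epsilon>_def by simp
    finally show ?thesis .
  qed
  then have "(norm (y - x))^2 < r^2" using muL by (simp add: mult_less_cancel_left_pos)
  then have yr: "norm (y - x) < r" using r0 by (simp add: power_less_imp_less_base)
  then have "dist y x < d" by (simp add: dist_norm r_def)
  then have hy: "h y > h x - \<delta> / 4" using d(2)[OF y(1)] by simp
  have "norm (gr x) * norm (y - x) \<le> \<delta> / 4"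
  proof -
    have "norm (gr x) * norm (y - x) \<le> (norm (gr x) + 1) * r"
      using yr by (intro mult_mono) auto
    also have "\<dots> \<le> (norm (gr x) + 1) * (\<delta> / (4 * (norm (gr x) + 1)))"
      by (intro mult_left_mono) (auto simp: r_def)
    also have "\<dots> = \<delta> / 4" using q4 by (simp add: field_simps add_nonneg_pos)
    finally show ?thesis .
  qed
  moreover have "\<bar>gr x \<bullet> (y - x)\<bar> \<le> norm (gr x) * norm (y - x)" by (rule Cauchy_Schwarz_ineq2)
  moreover have "\<mu> / 2 * (norm (y - x))^2 \<ge> 0" using mu0 by simp
  ultimately have "\<psi> y > - \<delta> / 2" using hy unfolding \<psi>_def by linarith
  moreover have "\<epsilon> \<le> \<delta> / 4" unfolding \<epsilon>_def by simp
  ultimately show False using y(2) d0 by linarith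
qed

lemma sum_list_nth: "sum_list (map g xs) = (\<Sum>j<length xs. g (xs ! j))"
  by (simp add: sum_list_sum_nth atLeast0LessThan)

lemma prox_svrg:
  assumes eta: "\<eta> > 0" and b: "b \<ge> 1"
    and cond: "\<And>j. j < m \<Longrightarrow> \<eta> * L^2 / real b * (real j * (2 * real j + 1)) \<le> 1 / (2 * \<eta>) - L / 2"
    and S: "nat \<lceil>real T / real m\<rceil> * m \<ge> 1"
    and xs_min: "\<And>y. y \<in> D \<Longrightarrow> F xstar \<le> F y"
    and c: "c \<ge> 0" and hyp: "\<And>x. x \<in> D \<Longrightarrow> F x - F xstar \<le> c * G \<eta> x"
    and y: "y \<in> D"
  shows "finite (set_pmf (ProxSVRG n gf h D y T m b \<eta>))"
    "set_pmf (ProxSVRG n gf h D y T m b \<eta>) \<subseteq> D"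
    "E (ProxSVRG n gf h D y T m b \<eta>) (\<lambda>x. F x - F xstar)
       \<le> c * (F y - F xstar) / real (nat \<lceil>real T / real m\<rceil> * m)"
proof -
  define Sn where "Sn = nat \<lceil>real T / real m\<rceil>"
  define Out where "Out = svrg_outer n gf h D b \<eta> m Sn y"
  have len: "length pts = Sn * m" "set pts \<subseteq> D" if "pts \<in> set_pmf Out" for pts
    using outer_set[OF eta y that[unfolded Out_def]] by auto
  have lne: "{..<length pts} \<noteq> {}" if "pts \<in> set_pmf Out" for pts
    using len(1)[OF that] S unfolding Sn_def by (auto simp: lessThan_empty_iff)
  have setp: "set_pmf (map_pmf (\<lambda>j. pts ! j) (pmf_of_set {..<length pts})) = (\<lambda>j. pts ! j) ` {..<length pts}"
    if "pts \<in> set_pmf Out" for pts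
    using lne[OF that] by simp
  have P: "ProxSVRG n gf h D y T m b \<eta> = bind_pmf Out (\<lambda>pts. map_pmf (\<lambda>j. pts ! j) (pmf_of_set {..<length pts}))"
    unfolding ProxSVRG_def Out_def Sn_def ..
  show "finite (set_pmf (ProxSVRG n gf h D y T m b \<eta>))"
    unfolding P using outer_fin[of b \<eta> m Sn y] setp by (auto simp: Out_def)
  show "set_pmf (ProxSVRG n gf h D y T m b \<eta>) \<subseteq> D"
    unfolding P
  proof
    fix x assume "x \<in> set_pmf (bind_pmf Out (\<lambda>pts. map_pmf (\<lambda>j. pts ! j) (pmf_of_set {..<length pts})))"
    then obtain pts j where pj: "pts \<in> set_pmf Out" "j < length pts" "x = pts ! j" using setp by auto
    then show "x \<in> D" using len(2)[OF pj(1)] nth_mem[OF pj(2)] by auto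
  qed
  have "E (ProxSVRG n gf h D y T m b \<eta>) (\<lambda>x. F x - F xstar)
      = E Out (\<lambda>pts. E (map_pmf (\<lambda>j. pts ! j) (pmf_of_set {..<length pts})) (\<lambda>x. F x - F xstar))"
    unfolding P
  proof (rule E_bind)
    show "finite (set_pmf Out)" unfolding Out_def by (rule outer_fin)
  next
    fix pts assume "pts \<in> set_pmf Out"
    then show "finite (set_pmf (map_pmf (\<lambda>j. pts ! j) (pmf_of_set {..<length pts})))"
      using setp by simp
  qed
  also have "\<dots> \<le> E Out (\<lambda>pts. c / real (Sn * m) * sum_list (map (G \<eta>) pts))"
  proof (rule E_mono)
    show "finite (set_pmf Out)" unfolding Out_def by (rule outer_fin)
  next
    fix pts assume pts: "pts \<in> set_pmf Out"
    have "E (map_pmf (\<lambda>j. pts ! j) (pmf_of_set {..<length pts})) (\<lambda>x. F x - F xstar)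
        = (\<Sum>j<length pts. F (pts ! j) - F xstar) / real (length pts)"
      using lne[OF pts] by (simp add: E_pmf_of_set)
    also have "\<dots> = sum_list (map (\<lambda>x. F x - F xstar) pts) / real (Sn * m)"
      using len(1)[OF pts] by (simp add: sum_list_nth)
    also have "\<dots> \<le> sum_list (map (\<lambda>x. c * G \<eta> x) pts) / real (Sn * m)"
      using len(2)[OF pts] hyp by (intro divide_right_mono sum_list_mono) auto
    also have "\<dots> = c / real (Sn * m) * sum_list (map (G \<eta>) pts)"
      by (simp add: sum_list_const_mult)
    finally show "E (map_pmf (\<lambda>j. pts ! j) (pmf_of_set {..<length pts})) (\<lambda>x. F x - F xstar)
        \<le> c / real (Sn * m) * sum_list (map (G \<eta>) pts)" .
  qed
  also have "\<dots> = c / real (Sn * m) * E Out (\<lambda>pts. sum_list (map (G \<eta>) pts))"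
    unfolding Out_def by (rule E_cmult[OF outer_fin])
  also have "\<dots> \<le> c / real (Sn * m) * (F y - F xstar)"
    unfolding Out_def using outer_claim[OF eta b cond xs_min y] c by (intro mult_left_mono) auto
  finally show "E (ProxSVRG n gf h D y T m b \<eta>) (\<lambda>x. F x - F xstar)
       \<le> c * (F y - F xstar) / real (nat \<lceil>real T / real m\<rceil> * m)"
    unfolding Sn_def by simp
qed

lemma pl_svrg:
  assumes eta: "\<eta> > 0" and b: "b \<ge> 1"
    and cond: "\<And>j. j < m \<Longrightarrow> \<eta> * L^2 / real b * (real j * (2 * real j + 1)) \<le> 1 / (2 * \<eta>) - L / 2"
    and S: "nat \<lceil>real T / real m\<rceil> * m \<ge> 1"
    and xs_min: "\<And>y. y \<in> D \<Longrightarrow> F xstar \<le> F y"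
    and c: "c \<ge> 0" and hyp: "\<And>x. x \<in> D \<Longrightarrow> F x - F xstar \<le> c * G \<eta> x"
    and half: "c / real (nat \<lceil>real T / real m\<rceil> * m) \<le> 1 / 2"
    and x0: "x0 \<in> D"
  shows "finite (set_pmf (PL_SVRG n gf h D x0 k T m b \<eta>)) \<and> set_pmf (PL_SVRG n gf h D x0 k T m b \<eta>) \<subseteq> D
     \<and> E (PL_SVRG n gf h D x0 k T m b \<eta>) (\<lambda>x. F x - F xstar) \<le> (F x0 - F xstar) / 2 ^ k"
proof (induction k)
  case 0 then show ?case using x0 by simp
next
  case (Suc k)
  define P where "P = PL_SVRG n gf h D x0 k T m b \<eta>"
  define q where "q = c / real (nat \<lceil>real T / real m\<rceil> * m)"
  have fP: "finite (set_pmf P)" and sP: "set_pmf P \<subseteq> D" and eP: "E P (\<lambda>x. F x - F xstar) \<le> (F x0 - F xstar) / 2 ^ k"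
    using Suc.IH unfolding P_def by auto
  have ps: "finite (set_pmf (ProxSVRG n gf h D y T m b \<eta>))" "set_pmf (ProxSVRG n gf h D y T m b \<eta>) \<subseteq> D"
    "E (ProxSVRG n gf h D y T m b \<eta>) (\<lambda>x. F x - F xstar) \<le> c * (F y - F xstar) / real (nat \<lceil>real T / real m\<rceil> * m)"
    if "y \<in> D" for y
    using prox_svrg[OF eta b cond S xs_min c hyp that] by auto
  have PS: "PL_SVRG n gf h D x0 (Suc k) T m b \<eta> = bind_pmf P (\<lambda>y. ProxSVRG n gf h D y T m b \<eta>)"
    unfolding P_def by simp
  have "E (PL_SVRG n gf h D x0 (Suc k) T m b \<eta>) (\<lambda>x. F x - F xstar)
      = E P (\<lambda>y. E (ProxSVRG n gf h D y T m b \<eta>) (\<lambda>x. F x - F xstar))"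
    unfolding PS by (rule E_bind[OF fP]) (use ps(1) sP in auto)
  also have "\<dots> \<le> E P (\<lambda>y. 1 / 2 * (F y - F xstar))"
  proof (rule E_mono[OF fP])
    fix y assume "y \<in> set_pmf P"
    then have yD: "y \<in> D" using sP by auto
    have "c * (F y - F xstar) / real (nat \<lceil>real T / real m\<rceil> * m) = q * (F y - F xstar)"
      unfolding q_def by simp
    also have "\<dots> \<le> 1 / 2 * (F y - F xstar)"
      using half xs_min[OF yD] unfolding q_def by (intro mult_right_mono) auto
    finally show "E (ProxSVRG n gf h D y T m b \<eta>) (\<lambda>x. F x - F xstar) \<le> 1 / 2 * (F y - F xstar)"
      by (rule order_trans[OF ps(3)[OF yD]])
  qed
  also have "\<dots> = 1 / 2 * E P (\<lambda>y. F y - F xstar)" by (rule E_cmult[OF fP])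
  also have "\<dots> \<le> 1 / 2 * ((F x0 - F xstar) / 2 ^ k)" using eP by (intro mult_left_mono) auto
  also have "\<dots> = (F x0 - F xstar) / 2 ^ Suc k" by simp
  finally have e: "E (PL_SVRG n gf h D x0 (Suc k) T m b \<eta>) (\<lambda>x. F x - F xstar) \<le> (F x0 - F xstar) / 2 ^ Suc k" .
  have "finite (set_pmf (PL_SVRG n gf h D x0 (Suc k) T m b \<eta>))"
    unfolding PS using fP sP ps(1) by auto
  moreover have "set_pmf (PL_SVRG n gf h D x0 (Suc k) T m b \<eta>) \<subseteq> D"
    unfolding PS using sP ps(2) by auto
  ultimately show ?case using e by blast
qed

end

theorem theorem8:
  fixes n b m K :: nat
    and L \<mu> \<rho> :: real
    and fs :: "nat \<Rightarrow> 'a::euclidean_space \<Rightarrow> real"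
    and gf :: "nat \<Rightarrow> 'a \<Rightarrow> 'a"
    and h :: "'a \<Rightarrow> real" and D :: "'a set"
    and xstar x0 :: 'a
  assumes n_pos: "n \<ge> 1"
    and grad: "\<And>i x. i < n \<Longrightarrow> (fs i has_derivative (\<lambda>v. gf i x \<bullet> v)) (at x)"
    and L_pos: "L > 0"
    and smooth: "\<And>i x y. i < n \<Longrightarrow> norm (gf i x - gf i y) \<le> L * norm (x - y)"
    and D_nonempty: "D \<noteq> {}"
    and D_closed: "closed D"
    and D_convex: "convex D"
    and h_convex: "convex_on D h"
    and h_lsc: "\<And>x e. x \<in> D \<Longrightarrow> e > 0 \<Longrightarrow> eventually (\<lambda>y. h y > h x - e) (at x within D)"
    and xstar_in: "xstar \<in> D"
    and xstar_min: "\<And>x. x \<in> D \<Longrightarrow> avg_fun n fs xstar + h xstar \<le> avg_fun n fs x + h x"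
    and PL: "is_PL \<mu> (avg_fun n fs) (avg_grad n gf) h D xstar"
    and b_pos: "b \<ge> 1" and b_le: "b \<le> n"
    and m_pos: "m \<ge> 1"
    and rho_pos: "0 < \<rho>" and rho_le: "\<rho> \<le> 1/5"
    and rho_cond: "4 * \<rho>^2 * (real m)^2 / real b + \<rho> \<le> 1"
    and K_pos: "K \<ge> 1"
    and x0_in: "x0 \<in> D"
  shows "measure_pmf.expectation
           (PL_SVRG n gf h D x0 K (nat \<lceil>6 * L / (\<rho> * \<mu>)\<rceil>) m b (\<rho> / L))
           (\<lambda>x. (avg_fun n fs x + h x) - (avg_fun n fs xstar + h xstar))
         \<le> ((avg_fun n fs x0 + h x0) - (avg_fun n fs xstar + h xstar)) / 2 ^ K"
proof -
  interpret svrg h D n fs gf L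
    by unfold_locales (use D_closed D_convex h_convex h_lsc D_nonempty n_pos grad L_pos smooth in auto)
  define \<eta> where "\<eta> = \<rho> / L"
  have eta: "\<eta> > 0" using rho_pos L_pos by (simp add: \<eta>_def)
  have mu0: "\<mu> > 0" using PL unfolding is_PL_def by simp
  define T where "T = nat \<lceil>6 * L / (\<rho> * \<mu>)\<rceil>"
  define c where "c = 1 / (\<eta> * \<mu>)"
  have c0: "c > 0" using eta mu0 by (simp add: c_def)
  have xs_min: "\<And>y. y \<in> D \<Longrightarrow> F xstar \<le> F y" using xstar_min by simp
  have inv_eta: "1 / \<eta> = L / \<rho>" by (simp add: \<eta>_def)
  have hyp: "F x - F xstar \<le> c * G \<eta> x" if x: "x \<in> D" for x
  proof (cases "\<mu> \<le> 1 / \<eta>")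
    case True
    have "\<mu> * (F x - F xstar) \<le> G \<eta> x / \<eta>" by (rule PL_G[OF eta True PL x])
    then have "\<mu> * (F x - F xstar) \<le> \<mu> * (c * G \<eta> x)"
      using mu0 eta by (simp add: c_def field_simps)
    then show ?thesis using mu0 by (rule mult_left_le_imp_le)
  next
    case False
    have "L \<le> L / \<rho>" using L_pos rho_pos rho_le by (simp add: le_divide_eq)
    then have "\<mu> > L" using False inv_eta by linarith
    then have "F x = F xstar" by (rule const_case[OF PL _ xs_min x])
    moreover have "c * G \<eta> x \<ge> 0" using c0 G_nonneg[OF eta x] by simp
    ultimately show ?thesis by simp
  qed
  have cond: "\<eta> * L^2 / real b * (real j * (2 * real j + 1)) \<le> 1 / (2 * \<eta>) - L / 2" if j: "j < m" for j
  proof -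
    define J where "J = real j * (2 * real j + 1)"
    have jm: "real j + 1 \<le> real m" using j by linarith
    have "J \<le> real m * (2 * real m)" unfolding J_def using jm by (intro mult_mono) auto
    then have J: "J \<le> 2 * (real m)^2" by (simp add: power2_eq_square)
    have bp: "real b > 0" using b_pos by simp
    have "2 * \<rho>^2 * J / real b \<le> 2 * \<rho>^2 * (2 * (real m)^2) / real b"
      using J bp by (intro divide_right_mono mult_left_mono) auto
    also have "\<dots> = 4 * \<rho>^2 * (real m)^2 / real b" by simp
    also have "\<dots> \<le> 1 - \<rho>" using rho_cond by simp
    finally have a: "2 * \<rho>^2 * J / real b \<le> 1 - \<rho>" .
    have "\<eta> * L^2 / real b * J = (L / (2 * \<rho>)) * (2 * \<rho>^2 * J / real b)"
      using rho_pos L_pos by (simp add: \<eta>_def field_simps power2_eq_square)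
    also have "\<dots> \<le> (L / (2 * \<rho>)) * (1 - \<rho>)"
      using a L_pos rho_pos by (intro mult_left_mono) auto
    also have "\<dots> = 1 / (2 * \<eta>) - L / 2"
      using rho_pos L_pos by (simp add: \<eta>_def field_simps)
    finally show ?thesis unfolding J_def .
  qed
  define Sn where "Sn = nat \<lceil>real T / real m\<rceil>"
  have pos6: "6 * L / (\<rho> * \<mu>) > 0" using L_pos rho_pos mu0 by simp
  have Tge: "real T \<ge> 6 * L / (\<rho> * \<mu>)" unfolding T_def by (rule real_nat_ceiling_ge)
  have mp: "real m > 0" using m_pos by simp
  have "real Sn \<ge> real T / real m" unfolding Sn_def by (rule real_nat_ceiling_ge)
  then have SmT: "real (Sn * m) \<ge> real T" using mp by (simp add: divide_le_eq)
  have S: "Sn * m \<ge> 1"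
  proof -
    have "real (Sn * m) > 0" using SmT Tge pos6 by linarith
    then have "0 < Sn * m" using of_nat_0_less_iff by blast
    then show ?thesis by linarith
  qed
  have "6 * L / (\<rho> * \<mu>) = 6 * c" using L_pos rho_pos mu0 by (simp add: c_def \<eta>_def field_simps)
  then have Sc: "real (Sn * m) \<ge> 6 * c" using SmT Tge by linarith
  have half: "c / real (Sn * m) \<le> 1 / 2"
  proof -
    have "c / real (Sn * m) \<le> c / (6 * c)" using c0 Sc by (intro divide_left_mono) auto
    also have "\<dots> = 1 / 6" using c0 by simp
    finally have "c / real (Sn * m) \<le> 1 / 6" .
    then show ?thesis by linarith
  qed
  have "E (PL_SVRG n gf h D x0 K T m b \<eta>) (\<lambda>x. F x - F xstar) \<le> (F x0 - F xstar) / 2 ^ K"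
    using pl_svrg[OF eta b_pos cond S[unfolded Sn_def] xs_min _ hyp half[unfolded Sn_def] x0_in, of K] c0 by auto
  then show ?thesis unfolding T_def \<eta>_def by simp
qed


end
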